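(* Let $N\ge1$, $\Lambda=\{0,1,\dots,N\}$, and let $T$ be the $(N+1)\times(N+1)$ Toeplitz matrix whose $(i,j)$ entry is $a_{i-j}$ ($i,j\in\Lambda$, with $a_{-N},\dots,a_N\in\mathbb{C}$), acting on $\mathbb{C}^{N+1}$ with standard basis $\{e_n\}_{n\in\Lambda}$. Let $C$ be a conjugation on $\mathbb{C}^{N+1}$ and $\{f_n\}_{n\in\Lambda}$ an orthonormal basis with $Cf_n=f_n$ for all $n$, and put $c_{n,m}=\sum_{k=0}^N\langle f_k,e_n\rangle\langle f_k,e_m\rangle$ for $m,n\in\Lambda$. Then $T$ is $C$-symmetric if and only if \[ \sum_{m=0}^{N}c_{m,p}\,\bar a_{m-k}=\sum_{m=0}^{N}c_{m,k}\,\bar a_{m-p}\qquad\text{for all }k,p\in\Lambda. \]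
   Context: A conjugation is an anti-linear, involutive ($C^2=I$), isometric map; $T$ is $C$-symmetric if $CT^*C=T$. The inner product on $\mathbb{C}^{N+1}$ is linear in the first entry. *)

theory Defs
  imports Complex_Main
begin

text \<open>Vectors of C^(N+1) are represented as functions nat => complex vanishing
  outside {0..N}; matrices as functions nat => nat => complex (entries with
  indices in {0..N} are relevant).\<close>

definition cvecs :: "nat \<Rightarrow> (nat \<Rightarrow> complex) set" where
  "cvecs N = {x. \<forall>i>N. x i = 0}"

definition cinner :: "nat \<Rightarrow> (nat \<Rightarrow> complex) \<Rightarrow> (nat \<Rightarrow> complex) \<Rightarrow> complex" where
  "cinner N x y = (\<Sum>k\<le>N. x k * cnj (y k))"

definition std_basis :: "nat \<Rightarrow> nat \<Rightarrow> complex" where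
  "std_basis n = (\<lambda>i. if i = n then 1 else 0)"

definition mat_app :: "nat \<Rightarrow> (nat \<Rightarrow> nat \<Rightarrow> complex) \<Rightarrow> (nat \<Rightarrow> complex) \<Rightarrow> (nat \<Rightarrow> complex)" where
  "mat_app N T x = (\<lambda>i. if i \<le> N then (\<Sum>j\<le>N. T i j * x j) else 0)"

definition mat_adj :: "(nat \<Rightarrow> nat \<Rightarrow> complex) \<Rightarrow> (nat \<Rightarrow> nat \<Rightarrow> complex)" where
  "mat_adj T = (\<lambda>i j. cnj (T j i))"

definition toeplitz :: "(int \<Rightarrow> complex) \<Rightarrow> (nat \<Rightarrow> nat \<Rightarrow> complex)" where
  "toeplitz a = (\<lambda>i j. a (int i - int j))"

definition is_conjugation :: "nat \<Rightarrow> ((nat \<Rightarrow> complex) \<Rightarrow> (nat \<Rightarrow> complex)) \<Rightarrow> bool" where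
  "is_conjugation N C \<longleftrightarrow>
     (\<forall>x\<in>cvecs N. C x \<in> cvecs N) \<and>
     (\<forall>x\<in>cvecs N. \<forall>y\<in>cvecs N. C (\<lambda>i. x i + y i) = (\<lambda>i. C x i + C y i)) \<and>
     (\<forall>x\<in>cvecs N. \<forall>c. C (\<lambda>i. c * x i) = (\<lambda>i. cnj c * C x i)) \<and>
     (\<forall>x\<in>cvecs N. C (C x) = x) \<and>
     (\<forall>x\<in>cvecs N. cinner N (C x) (C x) = cinner N x x)"

definition C_symmetric :: "nat \<Rightarrow> ((nat \<Rightarrow> complex) \<Rightarrow> (nat \<Rightarrow> complex)) \<Rightarrow> (nat \<Rightarrow> nat \<Rightarrow> complex) \<Rightarrow> bool" where
  "C_symmetric N C T \<longleftrightarrow> (\<forall>x\<in>cvecs N. C (mat_app N (mat_adj T) (C x)) = mat_app N T x)"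

definition orthonormal_basis :: "nat \<Rightarrow> (nat \<Rightarrow> nat \<Rightarrow> complex) \<Rightarrow> bool" where
  "orthonormal_basis N f \<longleftrightarrow>
     (\<forall>n\<le>N. f n \<in> cvecs N) \<and>
     (\<forall>n\<le>N. \<forall>m\<le>N. cinner N (f n) (f m) = (if n = m then 1 else 0)) \<and>
     (\<forall>x\<in>cvecs N. x = (\<lambda>i. \<Sum>n\<le>N. cinner N x (f n) * f n i))"

end

theory Submission
  imports Defs
begin

definition mm :: "nat \<Rightarrow> (nat\<Rightarrow>nat\<Rightarrow>complex) \<Rightarrow> (nat\<Rightarrow>nat\<Rightarrow>complex) \<Rightarrow> (nat\<Rightarrow>nat\<Rightarrow>complex)" where
  "mm N A B = (\<lambda>i j. \<Sum>k\<le>N. A i k * B k j)"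
definition eqN :: "nat \<Rightarrow> (nat\<Rightarrow>nat\<Rightarrow>complex) \<Rightarrow> (nat\<Rightarrow>nat\<Rightarrow>complex) \<Rightarrow> bool" where
  "eqN N A B \<longleftrightarrow> (\<forall>i\<le>N. \<forall>j\<le>N. A i j = B i j)"
definition idm :: "nat\<Rightarrow>nat\<Rightarrow>complex" where "idm = (\<lambda>i j. if i = j then 1 else 0)"

lemma mm_assoc: "mm N (mm N A B) D = mm N A (mm N B D)"
  unfolding mm_def
  apply (rule ext)+
  apply (simp add: sum_distrib_left sum_distrib_right mult.assoc)
  apply (subst sum.swap) by simp

lemma eqN_trans: "eqN N A B \<Longrightarrow> eqN N B D \<Longrightarrow> eqN N A D" by (simp add: eqN_def)
lemma eqN_sym: "eqN N A B \<Longrightarrow> eqN N B A" by (simp add: eqN_def)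
lemma mm_eq_right: "eqN N B B' \<Longrightarrow> eqN N (mm N A B) (mm N A B')"
  by (simp add: eqN_def mm_def)
lemma mm_eq_left: "eqN N A A' \<Longrightarrow> eqN N (mm N A B) (mm N A' B)"
  by (simp add: eqN_def mm_def)
lemma if10_mult: "(if P then (1::complex) else 0) * x = (if P then x else 0)" by simp
lemma mm_id_left: "eqN N (mm N idm A) A"
  by (simp add: eqN_def mm_def idm_def if10_mult)

lemma key_matrix:
  fixes J T :: "nat\<Rightarrow>nat\<Rightarrow>complex"
  defines "cJ \<equiv> (\<lambda>i j. cnj (J i j))" and "tT \<equiv> (\<lambda>i j. T j i)"
  assumes h1: "eqN N (mm N J cJ) idm" and h2: "eqN N (mm N cJ J) idm"
  shows "eqN N (mm N (mm N J tT) cJ) T \<longleftrightarrow> eqN N (mm N tT cJ) (mm N cJ T)"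
proof
  assume H: "eqN N (mm N (mm N J tT) cJ) T"
  have "eqN N (mm N cJ (mm N (mm N J tT) cJ)) (mm N cJ T)" using H by (rule mm_eq_right)
  moreover have "mm N cJ (mm N (mm N J tT) cJ) = mm N (mm N cJ J) (mm N tT cJ)"
    by (simp add: mm_assoc)
  moreover have "eqN N (mm N (mm N cJ J) (mm N tT cJ)) (mm N tT cJ)"
    using mm_eq_left[OF h2] mm_id_left eqN_trans by blast
  ultimately show "eqN N (mm N tT cJ) (mm N cJ T)" by (metis eqN_sym eqN_trans)
next
  assume H: "eqN N (mm N tT cJ) (mm N cJ T)"
  have "mm N (mm N J tT) cJ = mm N J (mm N tT cJ)" by (simp add: mm_assoc)
  moreover have "eqN N (mm N J (mm N tT cJ)) (mm N J (mm N cJ T))" using H by (rule mm_eq_right)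
  moreover have "mm N J (mm N cJ T) = mm N (mm N J cJ) T" by (simp add: mm_assoc)
  moreover have "eqN N (mm N (mm N J cJ) T) T"
    using mm_eq_left[OF h1] mm_id_left eqN_trans by blast
  ultimately show "eqN N (mm N (mm N J tT) cJ) T" by (metis eqN_trans)
qed

lemma calc:
  fixes J T :: "nat\<Rightarrow>nat\<Rightarrow>complex"
  shows "(\<Sum>k\<le>N. J i k * cnj (\<Sum>j\<le>N. cnj (T j k) * (\<Sum>l\<le>N. J j l * cnj (x l))))
     = (\<Sum>l\<le>N. (\<Sum>k\<le>N. (\<Sum>j\<le>N. J i j * T k j) * cnj (J k l)) * x l)"
proof -
  have "(\<Sum>k\<le>N. J i k * cnj (\<Sum>j\<le>N. cnj (T j k) * (\<Sum>l\<le>N. J j l * cnj (x l))))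
     = (\<Sum>k\<le>N. \<Sum>j\<le>N. \<Sum>l\<le>N. J i k * T j k * cnj (J j l) * x l)"
    by (simp add: sum_distrib_left mult.assoc)
  also have "... = (\<Sum>j\<le>N. \<Sum>k\<le>N. \<Sum>l\<le>N. J i k * T j k * cnj (J j l) * x l)"
    by (rule sum.swap)
  also have "... = (\<Sum>j\<le>N. \<Sum>l\<le>N. \<Sum>k\<le>N. J i k * T j k * cnj (J j l) * x l)"
    by (rule sum.cong[OF refl], rule sum.swap)
  also have "... = (\<Sum>l\<le>N. \<Sum>j\<le>N. \<Sum>k\<le>N. J i k * T j k * cnj (J j l) * x l)"
    by (rule sum.swap)
  also have "... = (\<Sum>l\<le>N. (\<Sum>k\<le>N. (\<Sum>j\<le>N. J i j * T k j) * cnj (J k l)) * x l)"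
    by (simp add: sum_distrib_right mult.assoc)
  finally show ?thesis .
qed

lemma conj_add: "is_conjugation N C \<Longrightarrow> x \<in> cvecs N \<Longrightarrow> y \<in> cvecs N \<Longrightarrow> C (\<lambda>i. x i + y i) = (\<lambda>i. C x i + C y i)"
  unfolding is_conjugation_def by blast
lemma conj_scal: "is_conjugation N C \<Longrightarrow> x \<in> cvecs N \<Longrightarrow> C (\<lambda>i. c * x i) = (\<lambda>i. cnj c * C x i)"
  unfolding is_conjugation_def by blast

lemma C_zero:
  assumes "is_conjugation N C" shows "C (\<lambda>i. 0) = (\<lambda>i. 0)"
proof -
  have z: "(\<lambda>i::nat. 0::complex) \<in> cvecs N" by (simp add: cvecs_def)
  have "C (\<lambda>i. 0 * (\<lambda>i. 0::complex) i) = (\<lambda>i. cnj 0 * C (\<lambda>i. 0) i)"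
    using conj_scal[OF assms z] .
  then show ?thesis by simp
qed

lemma C_sum:
  assumes "is_conjugation N C" "finite S" "\<forall>n\<in>S. g n \<in> cvecs N"
  shows "C (\<lambda>i. \<Sum>n\<in>S. g n i) = (\<lambda>i. \<Sum>n\<in>S. C (g n) i)"
  using assms(2,3)
proof (induction S rule: finite_induct)
  case empty
  then show ?case using C_zero[OF assms(1)] by simp
next
  case (insert x F)
  have cv: "(\<lambda>i. \<Sum>n\<in>F. g n i) \<in> cvecs N" using insert.prems by (simp add: cvecs_def)
  have gx: "g x \<in> cvecs N" using insert.prems by simp
  have "C (\<lambda>i. \<Sum>n\<in>insert x F. g n i) = C (\<lambda>i. g x i + (\<lambda>i. \<Sum>n\<in>F. g n i) i)"
    using insert.hyps by simp
  also have "... = (\<lambda>i. C (g x) i + C (\<lambda>i. \<Sum>n\<in>F. g n i) i)"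
    using conj_add[OF assms(1) gx cv] .
  also have "... = (\<lambda>i. \<Sum>n\<in>insert x F. C (g n) i)"
    using insert by simp
  finally show ?case .
qed

lemma C_formula:
  assumes conj: "is_conjugation N C" and onb: "orthonormal_basis N f"
    and fixf: "\<forall>n\<le>N. C (f n) = f n" and x: "x \<in> cvecs N"
  shows "C x = (\<lambda>i. if i \<le> N then \<Sum>k\<le>N. (\<Sum>n\<le>N. f n i * f n k) * cnj (x k) else 0)"
proof -
  have fcv: "\<forall>n\<le>N. f n \<in> cvecs N" using onb by (simp add: orthonormal_basis_def)
  have xe: "x = (\<lambda>i. \<Sum>n\<le>N. cinner N x (f n) * f n i)"
    using onb x by (simp add: orthonormal_basis_def)
  have sc: "\<forall>n\<le>N. (\<lambda>i. cinner N x (f n) * f n i) \<in> cvecs N"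
    using fcv by (simp add: cvecs_def)
  have "C x = (\<lambda>i. \<Sum>n\<le>N. C (\<lambda>i. cinner N x (f n) * f n i) i)"
    using C_sum[OF conj, of "{..N}" "\<lambda>n i. cinner N x (f n) * f n i"] sc xe by simp
  also have "... = (\<lambda>i. \<Sum>n\<le>N. cnj (cinner N x (f n)) * f n i)"
  proof -
    have "\<And>n. n \<le> N \<Longrightarrow> C (\<lambda>i. cinner N x (f n) * f n i) = (\<lambda>i. cnj (cinner N x (f n)) * f n i)"
      using conj_scal[OF conj] fcv fixf by metis
    then show ?thesis by simp
  qed
  also have "... = (\<lambda>i. if i \<le> N then \<Sum>k\<le>N. (\<Sum>n\<le>N. f n i * f n k) * cnj (x k) else 0)"
  proof (rule ext)
    fix i
    show "(\<Sum>n\<le>N. cnj (cinner N x (f n)) * f n i) = (if i \<le> N then \<Sum>k\<le>N. (\<Sum>n\<le>N. f n i * f n k) * cnj (x k) else 0)"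
    proof (cases "i \<le> N")
      case True
      have "(\<Sum>n\<le>N. cnj (cinner N x (f n)) * f n i) = (\<Sum>n\<le>N. \<Sum>k\<le>N. f n i * f n k * cnj (x k))"
        by (simp add: cinner_def sum_distrib_right sum_distrib_left mult_ac)
      also have "... = (\<Sum>k\<le>N. \<Sum>n\<le>N. f n i * f n k * cnj (x k))" by (rule sum.swap)
      also have "... = (\<Sum>k\<le>N. (\<Sum>n\<le>N. f n i * f n k) * cnj (x k))" by (simp add: sum_distrib_right)
      finally show ?thesis using True by simp
    next
      case False
      then have "\<forall>n\<le>N. f n i = 0" using fcv by (simp add: cvecs_def)
      then show ?thesis using False by simp
    qed
  qed
  finally show ?thesis .
qed

lemma sum_prod3:
  fixes X Y :: "nat \<Rightarrow> nat \<Rightarrow> complex"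
  shows "(\<Sum>j\<in>A. (\<Sum>n\<in>B. X n j) * (\<Sum>m\<in>B. Y m j)) = (\<Sum>n\<in>B. \<Sum>m\<in>B. \<Sum>j\<in>A. X n j * Y m j)"
proof -
  have "(\<Sum>j\<in>A. (\<Sum>n\<in>B. X n j) * (\<Sum>m\<in>B. Y m j)) = (\<Sum>j\<in>A. \<Sum>n\<in>B. \<Sum>m\<in>B. X n j * Y m j)"
    by (simp add: sum_product)
  also have "... = (\<Sum>n\<in>B. \<Sum>j\<in>A. \<Sum>m\<in>B. X n j * Y m j)" by (rule sum.swap)
  also have "... = (\<Sum>n\<in>B. \<Sum>m\<in>B. \<Sum>j\<in>A. X n j * Y m j)"
    by (rule sum.cong[OF refl], rule sum.swap)
  finally show ?thesis .
qed

lemma sum_std_r: "l \<le> N \<Longrightarrow> (\<Sum>j\<le>N. (M::nat\<Rightarrow>complex) j * std_basis l j) = M l"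
proof -
  assume l: "l \<le> N"
  have "(\<Sum>j\<le>N. M j * std_basis l j) = (\<Sum>j\<le>N. if j = l then M j else 0)"
    by (rule sum.cong) (auto simp: std_basis_def)
  then show ?thesis using l by simp
qed

theorem theorem9p1:
  fixes N :: nat and a :: "int \<Rightarrow> complex"
    and C :: "(nat \<Rightarrow> complex) \<Rightarrow> (nat \<Rightarrow> complex)"
    and f :: "nat \<Rightarrow> nat \<Rightarrow> complex"
    and c :: "nat \<Rightarrow> nat \<Rightarrow> complex"
  assumes "N \<ge> 1"
    and "is_conjugation N C"
    and "orthonormal_basis N f"
    and "\<forall>n\<le>N. C (f n) = f n"
    and "\<forall>n m. c n m = (\<Sum>k\<le>N. cinner N (f k) (std_basis n) * cinner N (f k) (std_basis m))"
  shows "C_symmetric N C (toeplitz a) \<longleftrightarrow>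
    (\<forall>k\<le>N. \<forall>p\<le>N. (\<Sum>m\<le>N. c m p * cnj (a (int m - int k))) = (\<Sum>m\<le>N. c m k * cnj (a (int m - int p))))"
proof -
  note conj = assms(2) and onb = assms(3) and fixf = assms(4) and cdef = assms(5)
  define J where "J = (\<lambda>i k. \<Sum>n\<le>N. f n i * f n k)"
  define cJ where "cJ = (\<lambda>i j. cnj (J i j))"
  define T where "T = toeplitz a"
  define tT where "tT = (\<lambda>i j. T j i)"
  have fcv: "\<forall>n\<le>N. f n \<in> cvecs N" using onb by (simp add: orthonormal_basis_def)
  have fz: "f n i = 0" if "n \<le> N" "i > N" for n i using fcv that by (simp add: cvecs_def)
  have Jsym: "J i k = J k i" for i k unfolding J_def by (simp add: mult.commute)
  have ortho: "(\<Sum>j\<le>N. f n j * cnj (f m j)) = (if n = m then 1 else 0)" if "n \<le> N" "m \<le> N" for n m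
    using onb that unfolding orthonormal_basis_def cinner_def by blast
  have complete: "(\<Sum>n\<le>N. cnj (f n l) * f n i) = (if i = l then 1 else 0)" if "i \<le> N" "l \<le> N" for i l
  proof -
    have sb: "std_basis l \<in> cvecs N" using that by (simp add: cvecs_def std_basis_def)
    have ex: "std_basis l = (\<lambda>i. \<Sum>n\<le>N. cinner N (std_basis l) (f n) * f n i)"
      using onb sb by (simp add: orthonormal_basis_def)
    have ci: "cinner N (std_basis l) (f n) = cnj (f n l)" for n
      using that by (simp add: cinner_def std_basis_def if10_mult)
    have "std_basis l i = (\<Sum>n\<le>N. cinner N (std_basis l) (f n) * f n i)"
      using fun_cong[OF ex, of i] by simp
    then have "std_basis l i = (\<Sum>n\<le>N. cnj (f n l) * f n i)" by (simp only: ci)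
    then show ?thesis by (simp add: std_basis_def)
  qed
  have h1: "eqN N (mm N J cJ) idm"
    unfolding eqN_def
  proof (intro allI impI)
    fix i l assume il: "i \<le> N" "l \<le> N"
    have "mm N J cJ i l = (\<Sum>j\<le>N. (\<Sum>n\<le>N. f n i * f n j) * (\<Sum>m\<le>N. cnj (f m j) * cnj (f m l)))"
      by (simp add: mm_def cJ_def J_def)
    also have "... = (\<Sum>n\<le>N. \<Sum>m\<le>N. \<Sum>j\<le>N. (f n i * f n j) * (cnj (f m j) * cnj (f m l)))"
      by (rule sum_prod3)
    also have "... = (\<Sum>n\<le>N. \<Sum>m\<le>N. (f n i * cnj (f m l)) * (\<Sum>j\<le>N. f n j * cnj (f m j)))"
      by (simp add: sum_distrib_left mult_ac)
    also have "... = (\<Sum>n\<le>N. \<Sum>m\<le>N. if n = m then f n i * cnj (f m l) else 0)"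
      by (intro sum.cong refl, simp add: ortho)
    also have "... = (\<Sum>n\<le>N. f n i * cnj (f n l))"
      by simp
    also have "... = (\<Sum>n\<le>N. cnj (f n l) * f n i)"
      by (rule sum.cong) (auto simp: mult.commute)
    also have "... = idm i l" using complete il by (simp add: idm_def)
    finally show "mm N J cJ i l = idm i l" .
  qed
  have h2: "eqN N (mm N cJ J) idm"
    unfolding eqN_def
  proof (intro allI impI)
    fix i l assume il: "i \<le> N" "l \<le> N"
    have "mm N cJ J i l = cnj (mm N J cJ i l)"
      by (simp add: mm_def cJ_def)
    also have "... = idm i l" using h1 il by (simp add: eqN_def idm_def)
    finally show "mm N cJ J i l = idm i l" .
  qed
  define Cf where "Cf = (\<lambda>x::nat\<Rightarrow>complex. (\<lambda>i. if i \<le> N then \<Sum>k\<le>N. J i k * cnj (x k) else 0))"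
  have CCf: "C x = Cf x" if "x \<in> cvecs N" for x
    using C_formula[OF conj onb fixf that] unfolding Cf_def J_def .
  have macv: "mat_app N M x \<in> cvecs N" for M x by (simp add: mat_app_def cvecs_def)
  have Cx_cv: "Cf x \<in> cvecs N" for x by (simp add: Cf_def cvecs_def)
  have main: "C (mat_app N (mat_adj T) (C x)) i = (if i \<le> N then \<Sum>l\<le>N. mm N (mm N J tT) cJ i l * x l else 0)"
    if x: "x \<in> cvecs N" for x i
  proof -
    have "C (mat_app N (mat_adj T) (C x)) = Cf (mat_app N (mat_adj T) (Cf x))"
      using CCf[OF x] CCf[OF macv] by simp
    moreover have "Cf (mat_app N (mat_adj T) (Cf x)) i = (if i \<le> N then \<Sum>l\<le>N. mm N (mm N J tT) cJ i l * x l else 0)"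
    proof (cases "i \<le> N")
      case True
      have "Cf (mat_app N (mat_adj T) (Cf x)) i = (\<Sum>k\<le>N. J i k * cnj (\<Sum>j\<le>N. cnj (T j k) * (\<Sum>l\<le>N. J j l * cnj (x l))))"
        using True by (simp add: Cf_def mat_app_def mat_adj_def)
      also have "... = (\<Sum>l\<le>N. (\<Sum>k\<le>N. (\<Sum>j\<le>N. J i j * T k j) * cnj (J k l)) * x l)"
        by (rule calc)
      also have "... = (\<Sum>l\<le>N. mm N (mm N J tT) cJ i l * x l)"
        by (simp add: mm_def tT_def cJ_def)
      finally show ?thesis using True by simp
    next
      case False
      then show ?thesis by (simp add: Cf_def)
    qed
    ultimately show ?thesis by simp
  qed
  have csym: "C_symmetric N C T \<longleftrightarrow> eqN N (mm N (mm N J tT) cJ) T"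
  proof
    assume H: "C_symmetric N C T"
    show "eqN N (mm N (mm N J tT) cJ) T"
      unfolding eqN_def
    proof (intro allI impI)
      fix i l assume il: "i \<le> N" "l \<le> N"
      have sb: "std_basis l \<in> cvecs N" using il by (simp add: cvecs_def std_basis_def)
      have "C (mat_app N (mat_adj T) (C (std_basis l))) i = mat_app N T (std_basis l) i"
        using H sb unfolding C_symmetric_def by simp
      then show "mm N (mm N J tT) cJ i l = T i l"
        using main[OF sb, of i] il sum_std_r[of l N "\<lambda>j. mm N (mm N J tT) cJ i j"]
          sum_std_r[of l N "\<lambda>j. T i j"] by (simp add: mat_app_def)
    qed
  next
    assume H: "eqN N (mm N (mm N J tT) cJ) T"
    show "C_symmetric N C T"
      unfolding C_symmetric_def
    proof (intro ballI ext)
      fix x i assume x: "x \<in> cvecs N"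
      show "C (mat_app N (mat_adj T) (C x)) i = mat_app N T x i"
        using main[OF x, of i] H by (simp add: mat_app_def eqN_def)
    qed
  qed
  have cJ': "c m p = J m p" for m p
  proof -
    have "cinner N (f k) (std_basis m) = f k m" if "k \<le> N" for k m
    proof -
      have "cinner N (f k) (std_basis m) = (\<Sum>ka\<le>N. if ka = m then f k ka else 0)"
        unfolding cinner_def std_basis_def by (rule sum.cong) auto
      then show ?thesis using fz[OF that] by auto
    qed
    then show ?thesis using cdef by (simp add: J_def)
  qed
  have cond: "((\<Sum>m\<le>N. c m p * cnj (a (int m - int k))) = (\<Sum>m\<le>N. c m k * cnj (a (int m - int p))))
     \<longleftrightarrow> mm N tT cJ k p = mm N cJ T k p" for k p
  proof -
    have e1: "cnj (\<Sum>m\<le>N. c m p * cnj (a (int m - int k))) = mm N tT cJ k p"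
      unfolding cJ' mm_def tT_def cJ_def T_def toeplitz_def cnj_sum complex_cnj_mult complex_cnj_cnj
      by (rule sum.cong) (simp_all add: mult.commute)
    have e2: "cnj (\<Sum>m\<le>N. c m k * cnj (a (int m - int p))) = mm N cJ T k p"
      unfolding cJ' mm_def cJ_def T_def toeplitz_def cnj_sum complex_cnj_mult complex_cnj_cnj
      by (rule sum.cong) (simp_all add: Jsym[of _ k])
    show ?thesis by (simp only: e1[symmetric] e2[symmetric] complex_cnj_cancel_iff)
  qed
  have km: "eqN N (mm N (mm N J tT) cJ) T \<longleftrightarrow> eqN N (mm N tT cJ) (mm N cJ T)"
    using key_matrix[of N J T] h1 h2 unfolding cJ_def tT_def by simp
  have fin: "C_symmetric N C (toeplitz a) \<longleftrightarrow> eqN N (mm N tT cJ) (mm N cJ T)"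
    using csym km by (simp add: T_def)
  show ?thesis unfolding fin eqN_def using cond by simp
qed

end
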